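(* If a graph $G$ has $n\ge 1$ vertices, then $m(G)\le \lceil n/3\rceil+1$.
   Context: All graphs are finite, simple and undirected. A list assignment $L$ for a graph $G$ assigns to each vertex $v$ a set $L(v)$ of colors; an $L$-coloring is a proper vertex coloring $c$ of $G$ with $c(v)\in L(v)$ for every vertex $v$. A $k$-list assignment is a list assignment with $|L(v)|=k$ for all $v$. $G$ is uniquely $k$-list colorable (U$k$LC) if there exists a $k$-list assignment $L$ such that $G$ has exactly one $L$-coloring. $G$ has property $M(k)$ if it is not U$k$LC, i.e. for every $k$-list assignment $L$, $G$ has either no $L$-coloring or at least two $L$-colorings. The m-number $m(G)$ is the least integer $k\ge 1$ such that $G$ has property $M(k)$. (Every U$k$LC graph is also U$(k-1)$LC, so $G$ is U$k$LC iff $k<m(G)$.) *)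

theory Defs
  imports Complex_Main
begin

definition simple_graph :: "'a set \<Rightarrow> ('a \<Rightarrow> 'a \<Rightarrow> bool) \<Rightarrow> bool" where
  "simple_graph V E \<longleftrightarrow> finite V \<and>
     (\<forall>u v. E u v \<longrightarrow> u \<in> V \<and> v \<in> V \<and> u \<noteq> v \<and> E v u)"

text \<open>Colours are natural numbers (the graph is finite, so countably many
  colours are enough).\<close>
definition k_list_assignment :: "'a set \<Rightarrow> ('a \<Rightarrow> nat set) \<Rightarrow> nat \<Rightarrow> bool" where
  "k_list_assignment V L k \<longleftrightarrow> (\<forall>v\<in>V. finite (L v) \<and> card (L v) = k)"

definition L_coloring :: "'a set \<Rightarrow> ('a \<Rightarrow> 'a \<Rightarrow> bool) \<Rightarrow> ('a \<Rightarrow> nat set) \<Rightarrow> ('a \<Rightarrow> nat) \<Rightarrow> bool" where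
  "L_coloring V E L c \<longleftrightarrow> (\<forall>v\<in>V. c v \<in> L v) \<and> (\<forall>u\<in>V. \<forall>v\<in>V. E u v \<longrightarrow> c u \<noteq> c v)"

definition unique_L_coloring :: "'a set \<Rightarrow> ('a \<Rightarrow> 'a \<Rightarrow> bool) \<Rightarrow> ('a \<Rightarrow> nat set) \<Rightarrow> bool" where
  "unique_L_coloring V E L \<longleftrightarrow>
     (\<exists>c. L_coloring V E L c \<and> (\<forall>c'. L_coloring V E L c' \<longrightarrow> (\<forall>v\<in>V. c' v = c v)))"

definition UkLC :: "'a set \<Rightarrow> ('a \<Rightarrow> 'a \<Rightarrow> bool) \<Rightarrow> nat \<Rightarrow> bool" where
  "UkLC V E k \<longleftrightarrow> (\<exists>L. k_list_assignment V L k \<and> unique_L_coloring V E L)"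

definition property_M :: "'a set \<Rightarrow> ('a \<Rightarrow> 'a \<Rightarrow> bool) \<Rightarrow> nat \<Rightarrow> bool" where
  "property_M V E k \<longleftrightarrow> \<not> UkLC V E k"

definition m_number :: "'a set \<Rightarrow> ('a \<Rightarrow> 'a \<Rightarrow> bool) \<Rightarrow> nat" where
  "m_number V E = (LEAST k. 1 \<le> k \<and> property_M V E k)"

end

theory Submission
  imports Defs
begin

lemma periodic_subset:
  fixes g :: "'b \<Rightarrow> 'b"
  shows "finite T \<Longrightarrow> T \<noteq> {} \<Longrightarrow> g ` T \<subseteq> T \<Longrightarrow> \<exists>P. P \<subseteq> T \<and> P \<noteq> {} \<and> g ` P = P"
proof (induction "card T" arbitrary: T rule: less_induct)
  case less
  show ?case
  proof (cases "g ` T = T")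
    case True
    then show ?thesis using less.prems by blast
  next
    case False
    then have sub: "g ` T \<subset> T" using less.prems by blast
    then have "card (g ` T) < card T" using less.prems(1) by (simp add: psubset_card_mono)
    moreover have "finite (g ` T)" using less.prems(1) by simp
    moreover have "g ` T \<noteq> {}" using less.prems(2) by simp
    moreover have "g ` (g ` T) \<subseteq> g ` T" using less.prems(3) by blast
    ultimately have "\<exists>P. P \<subseteq> g ` T \<and> P \<noteq> {} \<and> g ` P = P"
      by (rule less.hyps)
    then obtain P where P: "P \<subseteq> g ` T" "P \<noteq> {}" "g ` P = P" by blast
    have "P \<subseteq> T" using P(1) sub by auto
    then show ?thesis using P by (intro exI[of _ P]) simp
  qed
qed

lemma key:
  fixes V :: "'a set" and c :: "'a \<Rightarrow> nat"
  assumes fin: "finite T" and ne: "T \<noteq> {}" and TS: "T \<subseteq> c ` V"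
    and col: "L_coloring V E L c"
    and uniq: "\<forall>c'. L_coloring V E L c' \<longrightarrow> (\<forall>v\<in>V. c' v = c v)"
    and succ: "\<forall>a\<in>T. \<exists>b\<in>T. b \<noteq> a \<and> (\<forall>v\<in>V. c v = a \<longrightarrow> b \<in> L v)"
  shows False
proof -
  obtain g where g: "\<forall>a\<in>T. g a \<in> T \<and> g a \<noteq> a \<and> (\<forall>v\<in>V. c v = a \<longrightarrow> g a \<in> L v)"
  proof -
    have "\<forall>a\<in>T. \<exists>b. b \<in> T \<and> b \<noteq> a \<and> (\<forall>v\<in>V. c v = a \<longrightarrow> b \<in> L v)"
      using succ by blast
    from bchoice[OF this] obtain f where
      f: "\<forall>a\<in>T. f a \<in> T \<and> f a \<noteq> a \<and> (\<forall>v\<in>V. c v = a \<longrightarrow> f a \<in> L v)"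
      by (elim exE)
    show ?thesis by (rule that[OF f])
  qed
  have gT: "g ` T \<subseteq> T" using g by blast
  obtain P where P: "P \<subseteq> T" "P \<noteq> {}" "g ` P = P"
    using periodic_subset[OF fin ne gT] by (elim exE conjE)
  have finP: "finite P" using P(1) fin finite_subset by blast
  have injg: "inj_on g P"
    using P(3) finP by (simp add: eq_card_imp_inj_on)
  define \<sigma> where "\<sigma> a = (if a \<in> P then g a else a)" for a
  have injs: "\<sigma> x = \<sigma> y \<Longrightarrow> x = y" for x y
  proof -
    assume h: "\<sigma> x = \<sigma> y"
    show "x = y"
    proof (cases "x \<in> P")
      case xP: True
      then have gx: "g x \<in> P" using P(3) by blast
      show ?thesis
      proof (cases "y \<in> P")
        case True
        then have "g x = g y" using h xP by (simp add: \<sigma>_def)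
        then show ?thesis using injg xP True by (simp add: inj_on_def)
      next
        case False
        then have "g x = y" using h xP by (simp add: \<sigma>_def)
        then show ?thesis using gx False by simp
      qed
    next
      case xP: False
      show ?thesis
      proof (cases "y \<in> P")
        case True
        then have gy: "g y \<in> P" using P(3) by blast
        have "x = g y" using h xP True by (simp add: \<sigma>_def)
        then show ?thesis using gy xP by simp
      next
        case False
        then show ?thesis using h xP by (simp add: \<sigma>_def)
      qed
    qed
  qed
  have col': "L_coloring V E L (\<lambda>v. \<sigma> (c v))"
    unfolding L_coloring_def
  proof (intro conjI ballI impI)
    fix v assume v: "v \<in> V"
    show "\<sigma> (c v) \<in> L v"
    proof (cases "c v \<in> P")
      case True
      then show ?thesis using g P(1) v \<sigma>_def by auto
    next
      case False
      then show ?thesis using col v \<sigma>_def unfolding L_coloring_def by auto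
    qed
  next
    fix u v assume "u \<in> V" "v \<in> V" "E u v"
    then have "c u \<noteq> c v" using col unfolding L_coloring_def by blast
    then show "\<sigma> (c u) \<noteq> \<sigma> (c v)" using injs by blast
  qed
  obtain a where a: "a \<in> P" using P(2) by blast
  then obtain v where v: "v \<in> V" "c v = a" using P(1) TS by blast
  have "\<sigma> (c v) = c v" using uniq[rule_format, OF col' v(1)] by simp
  moreover have "\<sigma> (c v) = g a" using a v \<sigma>_def by simp
  moreover have "g a \<noteq> a" using g a P(1) by blast
  ultimately show False using v by simp
qed

lemma main:
  fixes V :: "'a set" and c :: "'a \<Rightarrow> nat"
  assumes sg: "simple_graph V E" and neV: "V \<noteq> {}"
    and Lk: "\<forall>v\<in>V. finite (L v) \<and> card (L v) = k"
    and col: "L_coloring V E L c"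
    and uniq: "\<forall>c'. L_coloring V E L c' \<longrightarrow> (\<forall>v\<in>V. c' v = c v)"
  shows "3 * k \<le> card V + 2"
proof -
  have finV: "finite V" using sg unfolding simple_graph_def by blast
  define S where "S = c ` V"
  define cls where "cls a = {v\<in>V. c v = a}" for a
  have finS: "finite S" using finV S_def by simp
  have colL: "\<forall>v\<in>V. c v \<in> L v" using col unfolding L_coloring_def by blast
  have blk: "\<exists>u\<in>V. E v u \<and> c u = b" if v: "v \<in> V" and b: "b \<in> L v" "b \<noteq> c v" for v b
  proof (rule ccontr)
    assume nb: "\<not> (\<exists>u\<in>V. E v u \<and> c u = b)"
    define c' where "c' = c(v := b)"
    have "L_coloring V E L c'"
      unfolding L_coloring_def
    proof (intro conjI ballI impI)
      fix w assume "w \<in> V" then show "c' w \<in> L w" using colL b c'_def by auto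
    next
      fix u w assume u: "u \<in> V" and w: "w \<in> V" and e: "E u w"
      have irr: "u \<noteq> w" and sym: "E w u" using sg e unfolding simple_graph_def by blast+
      show "c' u \<noteq> c' w"
      proof (cases "u = v")
        case True
        then have "c' w = c w" using irr c'_def by simp
        moreover have "c w \<noteq> b" using nb True e w by blast
        ultimately show ?thesis using True c'_def by simp
      next
        case uv: False
        show ?thesis
        proof (cases "w = v")
          case True
          then have "c u \<noteq> b" using nb sym u by blast
          then show ?thesis using True uv c'_def by simp
        next
          case False
          then show ?thesis using uv c'_def col u w e unfolding L_coloring_def by simp
        qed
      qed
    qed
    then have "c' v = c v" using uniq[rule_format, of c' v] v by blast
    then show False using b c'_def by simp
  qed
  have LS: "L v \<subseteq> S" if v: "v \<in> V" for v
  proof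
    fix b assume b: "b \<in> L v"
    show "b \<in> S"
    proof (cases "b = c v")
      case True then show ?thesis using v S_def by simp
    next
      case False
      then obtain u where "u \<in> V" "c u = b" using blk[OF v b] by blast
      then show ?thesis using S_def by blast
    qed
  qed
  have Lcard: "card (L v - {c v}) + 1 = k" if v: "v \<in> V" for v
  proof -
    have f: "finite (L v)" and ck: "card (L v) = k" using Lk v by auto
    have "c v \<in> L v" using colL v by blast
    then have "card (L v) > 0" using f card_gt_0_iff by blast
    then show ?thesis using f ck \<open>c v \<in> L v\<close> by (simp add: card_Diff_singleton)
  qed
  have clsfin: "finite (cls a)" for a using finV cls_def by simp
  have clsne: "cls a \<noteq> {}" if "a \<in> S" for a using that S_def cls_def by blast
  have cardV: "card V = (\<Sum>a\<in>S. card (cls a))"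
  proof -
    have "V = (\<Union>a\<in>S. cls a)" using S_def cls_def by blast
    moreover have "card (\<Union>a\<in>S. cls a) = (\<Sum>a\<in>S. card (cls a))"
      by (rule card_UN_disjoint) (use finS clsfin cls_def in auto)
    ultimately show ?thesis by simp
  qed
  define Big where "Big = {a\<in>S. 3 \<le> card (cls a)}"
  define Dbl where "Dbl = {a\<in>S. card (cls a) = 2}"
  define Sng where "Sng = {a\<in>S. card (cls a) = 1}"
  have Spart: "S = Big \<union> (Dbl \<union> Sng)"
  proof -
    have "card (cls a) \<ge> 1" if "a \<in> S" for a using clsne[OF that] clsfin[of a]
      by (simp add: Suc_le_eq card_gt_0_iff)
    then show ?thesis unfolding Big_def Dbl_def Sng_def by force
  qed
  have finB: "finite Big" "finite Dbl" "finite Sng" using finS Big_def Dbl_def Sng_def by auto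
  have disj1: "Big \<inter> (Dbl \<union> Sng) = {}" and disj2: "Dbl \<inter> Sng = {}"
    unfolding Big_def Dbl_def Sng_def by auto
  have nV: "3 * card Big + 2 * card Dbl + card Sng \<le> card V"
  proof -
    have "(\<Sum>a\<in>S. card (cls a)) = (\<Sum>a\<in>Big. card (cls a)) + ((\<Sum>a\<in>Dbl. card (cls a)) + (\<Sum>a\<in>Sng. card (cls a)))"
      using Spart finB disj1 disj2 by (simp add: sum.union_disjoint)
    moreover have "(\<Sum>a\<in>Big. card (cls a)) \<ge> (\<Sum>a\<in>Big. 3)"
      by (rule sum_mono) (simp add: Big_def)
    moreover have "(\<Sum>a\<in>Dbl. card (cls a)) = (\<Sum>a\<in>Dbl. 2)"
      by (rule sum.cong) (simp_all add: Dbl_def)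
    moreover have "(\<Sum>a\<in>Sng. card (cls a)) = (\<Sum>a\<in>Sng. 1)"
      by (rule sum.cong) (simp_all add: Sng_def)
    ultimately show ?thesis using cardV by simp
  qed
  have sngcls: "\<exists>v. cls a = {v}" if "a \<in> Sng" for a
    using that unfolding Sng_def by (auto simp: card_1_singleton_iff)
  have dblcls: "\<exists>x y. x \<noteq> y \<and> cls a = {x, y}" if "a \<in> Dbl" for a
    using that unfolding Dbl_def by (auto simp: card_2_iff)
  have STS: "T \<subseteq> c ` V" if "T \<subseteq> S" for T using that S_def by simp
  have sng_step: "Sng = {} \<or> k \<le> card Big + card Dbl + 1"
  proof (rule ccontr)
    assume H: "\<not> (Sng = {} \<or> k \<le> card Big + card Dbl + 1)"
    have "\<forall>a\<in>Sng. \<exists>b\<in>Sng. b \<noteq> a \<and> (\<forall>v\<in>V. c v = a \<longrightarrow> b \<in> L v)"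
    proof
      fix a assume a: "a \<in> Sng"
      obtain v where v: "cls a = {v}" using sngcls[OF a] by blast
      have vV: "v \<in> V" and cv: "c v = a" using v cls_def by auto
      have "\<not> (L v - {a} \<subseteq> Big \<union> Dbl)"
      proof
        assume "L v - {a} \<subseteq> Big \<union> Dbl"
        then have "card (L v - {a}) \<le> card (Big \<union> Dbl)" using finB by (simp add: card_mono)
        also have "\<dots> \<le> card Big + card Dbl" by (rule card_Un_le)
        finally show False using Lcard[OF vV] cv H by simp
      qed
      then obtain b where b: "b \<in> L v" "b \<noteq> a" "b \<notin> Big" "b \<notin> Dbl" by blast
      have "b \<in> S" using LS[OF vV] b by blast
      then have bS: "b \<in> Sng" using Spart b by blast
      have "\<forall>u\<in>V. c u = a \<longrightarrow> b \<in> L u"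
      proof (intro ballI impI)
        fix u assume "u \<in> V" "c u = a"
        then have "u \<in> cls a" using cls_def by simp
        then show "b \<in> L u" using v b by simp
      qed
      then show "\<exists>b\<in>Sng. b \<noteq> a \<and> (\<forall>v\<in>V. c v = a \<longrightarrow> b \<in> L v)" using bS b by blast
    qed
    moreover have "Sng \<subseteq> S" using Spart by blast
    moreover have "Sng \<noteq> {}" using H by blast
    ultimately show False using key[OF finB(3) _ STS col uniq] by blast
  qed
  show ?thesis
  proof (cases "Dbl \<union> Sng = {}")
    case True
    then have SB: "S = Big" using Spart by simp
    obtain v where vV: "v \<in> V" using neV by blast
    have "card (L v) \<le> card S" using LS[OF vV] finS by (simp add: card_mono)
    then have "k \<le> card S" using Lk vV by simp
    then show ?thesis using SB nV by simp
  next
    case False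
    define Sm where "Sm = Dbl \<union> Sng"
    have finSm: "finite Sm" using finB Sm_def by simp
    have SmS: "Sm \<subseteq> S" using Spart Sm_def by simp
    have Smne: "Sm \<noteq> {}" using False Sm_def by simp
    have "\<not> (\<forall>a\<in>Sm. \<exists>b\<in>Sm. b \<noteq> a \<and> (\<forall>v\<in>V. c v = a \<longrightarrow> b \<in> L v))"
      using key[OF finSm Smne STS[OF SmS] col uniq] by blast
    then obtain a where aSm: "a \<in> Sm"
      and noS0: "\<not> (\<exists>b\<in>Sm. b \<noteq> a \<and> (\<forall>v\<in>V. c v = a \<longrightarrow> b \<in> L v))"
      by blast
    have noS: "\<exists>u\<in>V. c u = a \<and> b \<notin> L u" if "b \<in> Sm" "b \<noteq> a" for b
      using noS0 that by blast
    show ?thesis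
    proof (cases "a \<in> Sng")
      case True
      obtain v where v: "cls a = {v}" using sngcls[OF True] by blast
      have vV: "v \<in> V" and cv: "c v = a" using v cls_def by auto
      have "L v - {a} \<subseteq> Big"
      proof
        fix b assume b: "b \<in> L v - {a}"
        show "b \<in> Big"
        proof (rule ccontr)
          assume "b \<notin> Big"
          moreover have "L v \<subseteq> Big \<union> Sm" using LS[OF vV] Spart Sm_def by simp
          ultimately have "b \<in> Sm" using b by blast
          then obtain u where u: "u \<in> V" "c u = a" "b \<notin> L u" using noS b by blast
          then have "u \<in> cls a" using cls_def by simp
          then show False using u v b by simp
        qed
      qed
      then have "card (L v - {a}) \<le> card Big" using finB by (simp add: card_mono)
      then have "k \<le> card Big + 1" using Lcard[OF vV] cv by simp
      moreover have "card Sng \<ge> 1"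
      proof -
        have "Sng \<noteq> {}" using True by blast
        then have "card Sng > 0" using finB(3) by (simp add: card_gt_0_iff)
        then show ?thesis by simp
      qed
      ultimately show ?thesis using nV by simp
    next
      case False
      then have aD: "a \<in> Dbl" using aSm Sm_def by blast
      obtain x y where xy: "x \<noteq> y" "cls a = {x, y}" using dblcls[OF aD] by blast
      have xV: "x \<in> V" and cx: "c x = a" and yV: "y \<in> V" and cy: "c y = a"
        using xy cls_def by auto
      define Bx where "Bx = (L x - {a}) \<inter> Sm"
      define By where "By = (L y - {a}) \<inter> Sm"
      have finBxy: "finite Bx" "finite By" using finSm Bx_def By_def by auto
      have dis: "Bx \<inter> By = {}"
      proof (rule ccontr)
        assume "Bx \<inter> By \<noteq> {}"
        then obtain b where b: "b \<in> Bx" "b \<in> By" by blast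
        then have "b \<in> Sm" "b \<noteq> a" using Bx_def by auto
        then obtain u where u: "u \<in> V" "c u = a" "b \<notin> L u" using noS by blast
        then have "u \<in> cls a" using cls_def by simp
        then have "u = x \<or> u = y" using xy by simp
        then show False using u(3) b unfolding Bx_def By_def by blast
      qed
      have "insert a (Bx \<union> By) \<subseteq> Sm" using aSm Bx_def By_def by auto
      then have "card (insert a (Bx \<union> By)) \<le> card Sm" using finSm by (simp add: card_mono)
      moreover have "a \<notin> Bx \<union> By" using Bx_def By_def by auto
      ultimately have c1: "card Bx + card By + 1 \<le> card Sm"
        using finBxy dis by (simp add: card_Un_disjoint)
      have csm: "card Sm = card Dbl + card Sng" using Sm_def finB disj2 by (simp add: card_Un_disjoint)
      have cbx: "k \<le> card Bx + card Big + 1"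
      proof -
        have "L x \<subseteq> Big \<union> Sm" using LS[OF xV] Spart Sm_def by simp
        then have "L x - {a} \<subseteq> Bx \<union> Big" unfolding Bx_def by blast
        then have "card (L x - {a}) \<le> card (Bx \<union> Big)" using finBxy finB by (simp add: card_mono)
        also have "\<dots> \<le> card Bx + card Big" by (rule card_Un_le)
        finally show ?thesis using Lcard[OF xV] cx by simp
      qed
      have cby: "k \<le> card By + card Big + 1"
      proof -
        have "L y \<subseteq> Big \<union> Sm" using LS[OF yV] Spart Sm_def by simp
        then have "L y - {a} \<subseteq> By \<union> Big" unfolding By_def by blast
        then have "card (L y - {a}) \<le> card (By \<union> Big)" using finBxy finB by (simp add: card_mono)
        also have "\<dots> \<le> card By + card Big" by (rule card_Un_le)
        finally show ?thesis using Lcard[OF yV] cy by simp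
      qed
      from sng_step show ?thesis
      proof
        assume "Sng = {}"
        then have "card Sng = 0" by simp
        then show ?thesis using nV c1 csm cbx cby by linarith
      next
        assume "k \<le> card Big + card Dbl + 1"
        then show ?thesis using nV c1 csm cbx cby by linarith
      qed
    qed
  qed
qed

theorem corollary2p3:
  fixes V :: "'a set" and E :: "'a \<Rightarrow> 'a \<Rightarrow> bool" and n :: nat
  assumes "simple_graph V E" and "card V = n" and "n \<ge> 1"
  shows "m_number V E \<le> nat \<lceil>real n / 3\<rceil> + 1"
  proof -
  define K where "K = nat \<lceil>real n / 3\<rceil> + 1"
  have ceil: "real n / 3 \<le> of_int \<lceil>real n / 3\<rceil>" by (rule le_of_int_ceiling)
  have nn: "0 \<le> \<lceil>real n / 3\<rceil>" by simp
  have "real n \<le> 3 * real (nat \<lceil>real n / 3\<rceil>)" using ceil nn by linarith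
  then have n3: "n \<le> 3 * nat \<lceil>real n / 3\<rceil>" by linarith
  have PM: "property_M V E K"
    unfolding property_M_def UkLC_def unique_L_coloring_def k_list_assignment_def
  proof
    assume "\<exists>L. (\<forall>v\<in>V. finite (L v) \<and> card (L v) = K) \<and>
      (\<exists>c. L_coloring V E L c \<and> (\<forall>c'. L_coloring V E L c' \<longrightarrow> (\<forall>v\<in>V. c' v = c v)))"
    then obtain L c where Lk: "\<forall>v\<in>V. finite (L v) \<and> card (L v) = K"
      and col: "L_coloring V E L c" and uniq: "\<forall>c'. L_coloring V E L c' \<longrightarrow> (\<forall>v\<in>V. c' v = c v)"
      by blast
    have "V \<noteq> {}" using assms(2,3) by auto
    then have "3 * K \<le> card V + 2" by (rule main[OF assms(1) _ Lk col uniq])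
    then show False using n3 assms(2) K_def by simp
  qed
  have "m_number V E \<le> K"
  proof -
    have "1 \<le> K \<and> property_M V E K" using PM K_def by simp
    then show ?thesis unfolding m_number_def by (rule Least_le)
  qed
  then show ?thesis using K_def by simp
qed

end
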